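(* Let $A,B,C,D$ be integers with $A<0$, $A$ odd and square-free, $B,C>0$, $D=B^2+C^2$ square-free, and $\gcd(A,D)=1$, and let $K=\mathbb{Q}\big(\sqrt{A(D+B\sqrt{D})}\big)$ (a totally imaginary cyclic quartic field). Then \[ \tfrac{1}{2304}\, A^2 D \le M(\mathcal{O}_K). \]
   Context: For a nonconstant polynomial $f(x)=c\prod_{i=1}^d (x-\alpha_i)\in\mathbb{C}[x]$, the Mahler measure is $M(f)=|c|\prod_{|\alpha_i|\ge 1}|\alpha_i|$. For an algebraic number $\alpha$, $M(\alpha)$ is the Mahler measure of its minimal polynomial over $\mathbb{Z}$ (with content $1$). For a number field $K$ with ring of integers $\mathcal{O}_K$, $M(\mathcal{O}_K)=\min\{M(\alpha):\alpha\in\mathcal{O}_K,\ \mathbb{Q}(\alpha)=K\}$. Every cyclic quartic field can be written uniquely as $\mathbb{Q}(\sqrt{A(D+B\sqrt{D})})$ with $A$ odd square-free, $D=B^2+C^2$ square-free, $B,C>0$, $\gcd(A,D)=1$; it is totally imaginary iff $A<0$. *)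

theory Defs
  imports "HOL-Computational_Algebra.Computational_Algebra"
begin

definition is_subfield_complex :: "complex set \<Rightarrow> bool" where
  "is_subfield_complex F \<longleftrightarrow> 0 \<in> F \<and> 1 \<in> F \<and>
     (\<forall>x\<in>F. \<forall>y\<in>F. x + y \<in> F \<and> x - y \<in> F \<and> x * y \<in> F) \<and>
     (\<forall>x\<in>F. inverse x \<in> F)"

definition gen_field :: "complex set \<Rightarrow> complex set" where
  "gen_field S = \<Inter> {F. is_subfield_complex F \<and> S \<subseteq> F}"

definition alg_integer :: "complex \<Rightarrow> bool" where
  "alg_integer x \<longleftrightarrow> (\<exists>p :: int poly. lead_coeff p = 1 \<and> poly (map_poly of_int p) x = 0)"

definition ring_of_integers :: "complex set \<Rightarrow> complex set" where
  "ring_of_integers K = {x \<in> K. alg_integer x}"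

definition mahler_measure :: "complex poly \<Rightarrow> real" where
  "mahler_measure p = cmod (lead_coeff p) *
     (\<Prod>r\<in>{r. poly p r = 0}. max 1 (cmod r) ^ order r p)"

definition is_min_int_poly :: "int poly \<Rightarrow> complex \<Rightarrow> bool" where
  "is_min_int_poly p x \<longleftrightarrow> irreducible p \<and> content p = 1 \<and>
     poly (map_poly of_int p) x = 0"

text \<open>Mahler measure of an algebraic number (independent of the sign of the minimal polynomial).\<close>
definition mahler_alg :: "complex \<Rightarrow> real" where
  "mahler_alg x = mahler_measure (map_poly of_int (SOME p. is_min_int_poly p x))"

definition mahler_ring_of_integers :: "complex set \<Rightarrow> real" where
  "mahler_ring_of_integers K =
     Inf {mahler_alg a | a. a \<in> ring_of_integers K \<and> gen_field {a} = K}"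

end

theory Submission
  imports Defs "Jordan_Normal_Form.Char_Poly"
begin


lemma sqf_dvd_pow:
  fixes n a :: int
  assumes sq: "squarefree n" and d: "n dvd a ^ k"
  shows "n dvd a"
proof -
  have n0: "n \<noteq> 0" using sq by (metis not_squarefree_0)
  show ?thesis
  proof (cases "a = 0")
    case True thus ?thesis by simp
  next
    case anz: False
  show ?thesis
  proof (rule multiplicity_le_imp_dvd[OF n0])
    fix p :: int assume p: "prime p"
    have m1: "multiplicity p n \<le> 1" using sq n0 p squarefree_factorial_semiring'' by blast
    show "multiplicity p n \<le> multiplicity p a"
    proof (cases "p dvd n")
      case False thus ?thesis by (simp add: not_dvd_imp_multiplicity_0)
    next
      case True
      hence "p dvd a ^ k" using d by (rule dvd_trans)
      hence pa: "p dvd a" using p prime_dvd_power by blast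
      have "multiplicity p a \<ge> 1" using pa p anz
          by (metis One_nat_def not_prime_unit power_one_right multiplicity_geI)
      thus ?thesis using m1 by linarith
    qed
  qed
  qed
qed

lemma rat_sq_int:
  fixes D :: int and x :: rat
  assumes sq: "squarefree D" and xi: "x^2 * of_int D \<in> \<int>"
  shows "x \<in> \<int>"
proof -
  obtain a b where q: "quotient_of x = (a,b)" by force
  have ab: "b > 0" "coprime a b" "x = of_int a / of_int b"
    using quotient_of_denom_pos[OF q] quotient_of_coprime[OF q] quotient_of_div[OF q] by auto
  from xi obtain k where k: "x^2 * of_int D = of_int k" by (auto elim: Ints_cases)
  have "of_int (a^2 * D) = (of_int (k * b^2) :: rat)"
    using k ab(1) by (simp add: ab(3) field_simps power2_eq_square)
  hence eq: "a^2 * D = k * b^2" by (simp only: of_int_eq_iff)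
  have "b^2 dvd a^2 * D" using eq by simp
  moreover have "coprime (b^2) (a^2)" using ab(2) by (simp add: coprime_commute)
  ultimately have "b^2 dvd D" using coprime_dvd_mult_right_iff by blast
  hence "b dvd 1" using sq squarefreeD by blast
  hence "b = 1" using ab(1) by simp
  thus ?thesis using ab(3) by simp
qed


definition zspan :: "complex set \<Rightarrow> complex set" where
  "zspan G = {w. \<exists>c::complex\<Rightarrow>int. w = (\<Sum>h\<in>G. of_int (c h) * h)}"

lemma zspan_add: "a \<in> zspan G \<Longrightarrow> b \<in> zspan G \<Longrightarrow> a + b \<in> zspan G"
  unfolding zspan_def
proof safe
  fix c d :: "complex \<Rightarrow> int"
  show "\<exists>e. (\<Sum>h\<in>G. of_int (c h) * h) + (\<Sum>h\<in>G. of_int (d h) * h) = (\<Sum>h\<in>G. of_int (e h) * h)"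
    by (rule exI[of _ "\<lambda>h. c h + d h"]) (simp add: sum.distrib[symmetric] algebra_simps)
qed

lemma zspan_smult: "a \<in> zspan G \<Longrightarrow> of_int k * a \<in> zspan G"
  unfolding zspan_def
proof safe
  fix c :: "complex \<Rightarrow> int"
  show "\<exists>e. of_int k * (\<Sum>h\<in>G. of_int (c h) * h) = (\<Sum>h\<in>G. of_int (e h) * h)"
    by (rule exI[of _ "\<lambda>h. k * c h"]) (simp add: sum_distrib_left algebra_simps)
qed

lemma zspan_0: "0 \<in> zspan G"
  unfolding zspan_def by (rule CollectI, rule exI[of _ "\<lambda>h. 0"]) simp

lemma zspan_sum: "finite I \<Longrightarrow> (\<And>i. i \<in> I \<Longrightarrow> f i \<in> zspan G) \<Longrightarrow> sum f I \<in> zspan G"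
  by (induction I rule: finite_induct) (auto intro: zspan_add zspan_0)

lemma zspan_mem: assumes "finite G" "g \<in> G" shows "g \<in> zspan G"
proof -
  have "(\<Sum>h\<in>G. of_int (if h = g then 1 else 0) * h) = (\<Sum>h\<in>G. if h = g then h else 0)"
    by (rule sum.cong) auto
  also have "\<dots> = g" using assms by (simp add: sum.delta)
  finally have "(\<Sum>h\<in>G. of_int (if h = g then 1 else 0) * h) = g" .
  thus ?thesis unfolding zspan_def by (intro CollectI exI[of _ "\<lambda>h. if h = g then 1 else 0"]) simp
qed

lemma zspan_mult_closed:
  assumes fin: "finite G" and z1: "\<forall>g\<in>G. z1 * g \<in> zspan G" and z2: "\<forall>g\<in>G. z2 * g \<in> zspan G"
  shows "\<forall>g\<in>G. (z1 * z2) * g \<in> zspan G" "\<forall>g\<in>G. (z1 + z2) * g \<in> zspan G"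
proof safe
  fix g assume g: "g \<in> G"
  from z2 g obtain c where c: "z2 * g = (\<Sum>h\<in>G. of_int (c h) * h)" unfolding zspan_def by auto
  have "(z1 * z2) * g = z1 * (z2 * g)" by (simp add: mult.assoc)
  also have "\<dots> = (\<Sum>h\<in>G. z1 * (of_int (c h) * h))" by (simp add: c sum_distrib_left)
  also have "\<dots> = (\<Sum>h\<in>G. of_int (c h) * (z1 * h))" by (simp add: mult.left_commute)
  also have "\<dots> \<in> zspan G" using fin z1 by (intro zspan_sum zspan_smult) auto
  finally show "(z1 * z2) * g \<in> zspan G" .
  show "(z1 + z2) * g \<in> zspan G" using z1 z2 g by (simp add: distrib_right zspan_add)
qed

lemma alg_int_module:
  fixes G :: "complex set" and z :: complex
  assumes fin: "finite G" and one: "1 \<in> G"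
    and cl: "\<forall>g\<in>G. z * g \<in> zspan G"
  shows "algebraic_int z"
proof -
  define N where "N = card G"
  obtain f where bij: "bij_betw f {..<N} G" using ex_bij_betw_nat_finite[OF fin] N_def
    by (metis lessThan_atLeast0)
  have "\<forall>g\<in>G. \<exists>c. z * g = (\<Sum>h\<in>G. of_int (c h) * h)" using cl unfolding zspan_def by auto
  then obtain C where C: "\<And>g. g \<in> G \<Longrightarrow> z * g = (\<Sum>h\<in>G. of_int (C g h) * h)" by metis
  define Mi :: "int mat" where "Mi = mat N N (\<lambda>(i,j). C (f i) (f j))"
  define Mc :: "complex mat" where "Mc = map_mat of_int Mi"
  define v where "v = vec N f"
  have Mi: "Mi \<in> carrier_mat N N" unfolding Mi_def by auto
  have Mc: "Mc \<in> carrier_mat N N" unfolding Mc_def using Mi by auto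
  have fi: "\<And>i. i < N \<Longrightarrow> f i \<in> G" using bij by (auto simp: bij_betw_def)
  have Mv: "Mc *\<^sub>v v = z \<cdot>\<^sub>v v"
  proof (rule eq_vecI)
    fix i assume i: "i < dim_vec (z \<cdot>\<^sub>v v)"
    hence i: "i < N" by (simp add: v_def)
    have "(Mc *\<^sub>v v) $ i = (\<Sum>j<N. of_int (C (f i) (f j)) * f j)"
      using i Mc unfolding Mc_def Mi_def v_def
      by (simp add: scalar_prod_def row_def lessThan_atLeast0)
    also have "\<dots> = (\<Sum>h\<in>G. of_int (C (f i) h) * h)"
      using sum.reindex_bij_betw[OF bij, of "\<lambda>h. of_int (C (f i) h) * h"] by simp
    also have "\<dots> = z * f i" using C[OF fi[OF i]] by simp
    finally show "(Mc *\<^sub>v v) $ i = (z \<cdot>\<^sub>v v) $ i" using i by (simp add: v_def)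
  qed (simp add: v_def Mc_def Mi_def)
  have "1 \<in> f ` {..<N}" using bij one by (auto simp: bij_betw_def)
  then obtain i0 where i0: "i0 < N" "f i0 = 1" by auto
  have vnz: "v \<noteq> 0\<^sub>v N"
  proof
    assume "v = 0\<^sub>v N"
    hence "v $ i0 = 0" using i0 by simp
    thus False using i0 by (simp add: v_def)
  qed
  have "eigenvector Mc v z" unfolding eigenvector_def using Mc Mv vnz
    by (auto simp: v_def)
  hence "eigenvalue Mc z" unfolding eigenvalue_def by auto
  hence "poly (char_poly Mc) z = 0" using eigenvalue_root_char_poly[OF Mc] by simp
  hence "poly (of_int_poly (char_poly Mi)) z = 0"
    unfolding Mc_def of_int_hom.char_poly_hom[OF Mi] .
  moreover have "monic (char_poly Mi)" using degree_monic_char_poly[OF Mi] by simp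
  ultimately show ?thesis unfolding algebraic_int_altdef_ipoly by blast
qed

lemma monic_root_power:
  fixes p :: "int poly" and x :: complex
  assumes "monic p" "poly (of_int_poly p) x = 0"
  shows "x ^ degree p = (\<Sum>i<degree p. of_int (- coeff p i) * x ^ i)"
proof -
  have "0 = poly (of_int_poly p) x" using assms by simp
  also have "\<dots> = (\<Sum>i\<le>degree p. of_int (coeff p i) * x ^ i)"
    by (simp add: poly_altdef coeff_map_poly degree_map_poly)
  also have "\<dots> = (\<Sum>i<degree p. of_int (coeff p i) * x ^ i) + x ^ degree p"
    using assms(1) by (simp add: lessThan_Suc_atMost[symmetric])
  finally show ?thesis by (simp add: sum_negf eq_neg_iff_add_eq_0 add.commute)
qed

lemma alg_int_add_mult:
  fixes x y :: complex
  assumes ax: "algebraic_int x" and ay: "algebraic_int y"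
  shows "algebraic_int (x + y) \<and> algebraic_int (x * y)"
proof -
  obtain p where p: "poly (of_int_poly p) x = 0" "monic p" using ax unfolding algebraic_int_altdef_ipoly by blast
  obtain q where q: "poly (of_int_poly q) y = 0" "monic q" using ay unfolding algebraic_int_altdef_ipoly by blast
  define n where "n = degree p"
  define m where "m = degree q"
  have n0: "n > 0"
  proof (rule ccontr)
    assume "\<not> n > 0" hence "degree p = 0" by (simp add: n_def)
    hence "p = 1" using p(2) by (metis monic_degree_0)
    thus False using p(1) by simp
  qed
  have m0: "m > 0"
  proof (rule ccontr)
    assume "\<not> m > 0" hence "degree q = 0" by (simp add: m_def)
    hence "q = 1" using q(2) by (metis monic_degree_0)
    thus False using q(1) by simp
  qed
  define G where "G = (\<lambda>(a,b). x ^ a * y ^ b) ` ({..<n} \<times> {..<m})"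
  have fin: "finite G" unfolding G_def by auto
  have one: "1 \<in> G" unfolding G_def using n0 m0 by (auto intro!: image_eqI[of _ _ "(0,0)"])
  have xn: "x ^ n = (\<Sum>i<n. of_int (- coeff p i) * x ^ i)" unfolding n_def by (rule monic_root_power[OF p(2,1)])
  have yn: "y ^ m = (\<Sum>i<m. of_int (- coeff q i) * y ^ i)" unfolding m_def by (rule monic_root_power[OF q(2,1)])
  have xG: "\<forall>g\<in>G. x * g \<in> zspan G"
  proof
    fix g assume "g \<in> G"
    then obtain a b where ab: "a < n" "b < m" "g = x ^ a * y ^ b" unfolding G_def by auto
    show "x * g \<in> zspan G"
    proof (cases "Suc a < n")
      case True
      hence "x * g \<in> G" unfolding G_def using ab by (auto intro!: image_eqI[of _ _ "(Suc a, b)"])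
      thus ?thesis by (rule zspan_mem[OF fin])
    next
      case False
      hence "Suc a = n" using ab by simp
      hence "x * g = x ^ n * y ^ b" using ab by (metis mult.assoc power_Suc)
      also have "\<dots> = (\<Sum>i<n. of_int (- coeff p i) * (x ^ i * y ^ b))"
        by (simp add: xn sum_distrib_right mult.assoc)
      also have "\<dots> \<in> zspan G"
        using ab by (intro zspan_sum zspan_smult zspan_mem[OF fin]) (auto simp: G_def)
      finally show ?thesis .
    qed
  qed
  have yG: "\<forall>g\<in>G. y * g \<in> zspan G"
  proof
    fix g assume "g \<in> G"
    then obtain a b where ab: "a < n" "b < m" "g = x ^ a * y ^ b" unfolding G_def by auto
    show "y * g \<in> zspan G"
    proof (cases "Suc b < m")
      case True
      hence "y * g \<in> G" unfolding G_def using ab by (auto simp: mult.left_commute intro!: image_eqI[of _ _ "(a, Suc b)"])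
      thus ?thesis by (rule zspan_mem[OF fin])
    next
      case False
      hence "Suc b = m" using ab by simp
      hence "y * g = x ^ a * y ^ m" using ab by (metis mult.left_commute power_Suc)
      also have "\<dots> = (\<Sum>i<m. of_int (- coeff q i) * (x ^ a * y ^ i))"
        by (simp add: yn sum_distrib_left mult.left_commute)
      also have "\<dots> \<in> zspan G"
        using ab by (intro zspan_sum zspan_smult zspan_mem[OF fin]) (auto simp: G_def)
      finally show ?thesis .
    qed
  qed
  show ?thesis using zspan_mult_closed[OF fin xG yG] alg_int_module[OF fin one] by blast
qed

lemma alg_int_add: "algebraic_int (x::complex) \<Longrightarrow> algebraic_int y \<Longrightarrow> algebraic_int (x + y)"
  using alg_int_add_mult by blast
lemma alg_int_mult: "algebraic_int (x::complex) \<Longrightarrow> algebraic_int y \<Longrightarrow> algebraic_int (x * y)"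
  using alg_int_add_mult by blast
lemma alg_int_diff: "algebraic_int (x::complex) \<Longrightarrow> algebraic_int y \<Longrightarrow> algebraic_int (x - y)"
  using alg_int_add[of x "-y"] by auto


locale cq =
  fixes A B C D :: int
  assumes A_neg: "A < 0" and A_odd: "odd A" and A_sqf: "squarefree A"
    and B_pos: "B > 0" and C_pos: "C > 0" and D_def: "D = B^2 + C^2"
    and D_sqf: "squarefree D" and AD_coprime: "gcd A D = 1"
begin

definition s :: real where "s = sqrt (real_of_int D)"

lemma D_ge2: "D \<ge> 2"
proof -
  have "B^2 \<ge> 1" "C^2 \<ge> 1" using B_pos C_pos by (simp_all add: one_le_power)
  thus ?thesis using D_def by simp
qed

lemma s_pos: "s > 0" using D_ge2 by (simp add: s_def)
lemma s_sq: "s * s = real_of_int D" using D_ge2 by (simp add: s_def)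
lemma s_sq2: "s ^ 2 = real_of_int D" using s_sq by (simp add: power2_eq_square)

lemma s_irr: "s \<notin> \<rat>"
proof
  assume "s \<in> \<rat>"
  moreover have "algebraic_int s" unfolding s_def by (intro algebraic_int_sqrt) simp
  ultimately have "s \<in> \<int>" using rational_algebraic_int_is_int by blast
  then obtain k where k: "s = of_int k" by (auto elim: Ints_cases)
  hence "real_of_int D = of_int (k^2)" using s_sq2 by simp
  hence "D = k^2" by (simp only: of_int_eq_iff)
  hence "k dvd 1" using D_sqf squarefreeD[of D k] by simp
  hence "\<bar>k\<bar> = 1" by simp
  hence "D = 1" using \<open>D = k^2\<close> by (metis abs_power2 power2_abs one_power2)
  thus False using D_ge2 by simp
qed

lemma irr2: fixes a b :: rat assumes "a^2 = of_int D * b^2" shows "b = 0"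
proof (rule ccontr)
  assume b: "b \<noteq> 0"
  hence "(a/b)^2 = of_int D" using assms by (simp add: field_simps power2_eq_square)
  hence "(of_rat (a/b) :: real)^2 = real_of_int D" by (metis of_rat_of_int_eq of_rat_power)
  hence "sqrt (real_of_int D) = \<bar>of_rat (a/b)\<bar>" by (metis real_sqrt_abs)
  hence "s \<in> \<rat>" unfolding s_def by (metis Rats_of_rat Rats_abs_iff)
  thus False using s_irr by simp
qed

fun kv :: "rat \<times> rat \<Rightarrow> real" where "kv (a,b) = of_rat a + of_rat b * s"
fun kc :: "rat \<times> rat \<Rightarrow> real" where "kc (a,b) = of_rat a - of_rat b * s"

lemma kv_zero: assumes "kv p = 0" shows "p = (0,0)"
proof (cases p)
  case (Pair a b)
  hence "of_rat a = - of_rat b * s" using assms by simp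
  hence "(of_rat a)^2 = (of_rat b)^2 * (s^2)" by (simp add: power2_eq_square)
  hence "(of_rat (a^2) :: real) = of_rat (of_int D * b^2)" using s_sq2 by (simp add: of_rat_mult of_rat_power)
  hence "a^2 = of_int D * b^2" by (simp only: of_rat_eq_iff)
  hence "b = 0" by (rule irr2)
  thus ?thesis using Pair assms by simp
qed

lemma kc_zero: assumes "kc p = 0" shows "p = (0,0)"
proof (cases p)
  case (Pair a b)
  hence "of_rat a = of_rat b * s" using assms by simp
  hence "(of_rat a)^2 = (of_rat b)^2 * (s^2)" by (simp add: power2_eq_square)
  hence "(of_rat (a^2) :: real) = of_rat (of_int D * b^2)" using s_sq2 by (simp add: of_rat_mult of_rat_power)
  hence "a^2 = of_int D * b^2" by (simp only: of_rat_eq_iff)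
  hence "b = 0" by (rule irr2)
  thus ?thesis using Pair assms by simp
qed

fun kmul :: "rat \<times> rat \<Rightarrow> rat \<times> rat \<Rightarrow> rat \<times> rat" where
  "kmul (a,b) (c,d) = (a*c + of_int D*b*d, a*d + b*c)"
fun kadd :: "rat \<times> rat \<Rightarrow> rat \<times> rat \<Rightarrow> rat \<times> rat" where
  "kadd (a,b) (c,d) = (a+c, b+d)"
fun kneg :: "rat \<times> rat \<Rightarrow> rat \<times> rat" where
  "kneg (a,b) = (-a, -b)"
fun kinv :: "rat \<times> rat \<Rightarrow> rat \<times> rat" where
  "kinv (a,b) = (a / (a^2 - of_int D * b^2), - b / (a^2 - of_int D * b^2))"

lemma kv_mul: "kv (kmul p q) = kv p * kv q"
  by (cases p; cases q) (simp add: of_rat_mult of_rat_add algebra_simps s_sq[symmetric])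
lemma kc_mul: "kc (kmul p q) = kc p * kc q"
  by (cases p; cases q) (simp add: of_rat_mult of_rat_add algebra_simps s_sq[symmetric])
lemma kv_add: "kv (kadd p q) = kv p + kv q"
  by (cases p; cases q) (simp add: of_rat_add algebra_simps)
lemma kc_add: "kc (kadd p q) = kc p + kc q"
  by (cases p; cases q) (simp add: of_rat_add algebra_simps)
lemma kv_neg: "kv (kneg p) = - kv p"
  by (cases p) (simp add: of_rat_minus)
lemma kc_neg: "kc (kneg p) = - kc p"
  by (cases p) (simp add: of_rat_minus)

lemma kinv_aux: fixes a b :: rat assumes "(a,b) \<noteq> (0,0)" shows "a^2 - of_int D * b^2 \<noteq> 0"
  using irr2[of a b] assms by auto

lemma kv_inv: assumes "p \<noteq> (0,0)" shows "kv (kinv p) * kv p = 1"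
proof (cases p)
  case (Pair a b)
  have n: "a^2 - of_int D * b^2 \<noteq> 0" using kinv_aux assms Pair by simp
  have n': "(of_rat a)^2 - of_int D * (of_rat b)^2 \<noteq> (0::real)"
  proof
    assume "(of_rat a)^2 - of_int D * (of_rat b)^2 = (0::real)"
    hence "of_rat (a^2 - of_int D * b^2) = (0::real)" by (simp add: of_rat_diff of_rat_mult of_rat_power)
    thus False using n by simp
  qed
  define n :: real where "n = (of_rat a)^2 - of_int D * (of_rat b)^2"
  have e1: "kv (kinv p) = (of_rat a - of_rat b * s) / n"
    using Pair by (simp add: n_def of_rat_divide of_rat_diff of_rat_mult of_rat_power of_rat_minus diff_divide_distrib add_divide_distrib)
  have e2: "(of_rat a - of_rat b * s) * (of_rat a + of_rat b * s) = n"
    by (simp add: n_def algebra_simps power2_eq_square s_sq[symmetric])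
  have "kv (kinv p) * kv p = ((of_rat a - of_rat b * s) * (of_rat a + of_rat b * s)) / n"
    using Pair e1 by simp
  also have "\<dots> = 1" using n' e2 by (simp add: n_def)
  finally show ?thesis .
qed

lemma kc_inv: assumes "p \<noteq> (0,0)" shows "kc (kinv p) * kc p = 1"
proof (cases p)
  case (Pair a b)
  have n: "a^2 - of_int D * b^2 \<noteq> 0" using kinv_aux assms Pair by simp
  have n': "(of_rat a)^2 - of_int D * (of_rat b)^2 \<noteq> (0::real)"
  proof
    assume "(of_rat a)^2 - of_int D * (of_rat b)^2 = (0::real)"
    hence "of_rat (a^2 - of_int D * b^2) = (0::real)" by (simp add: of_rat_diff of_rat_mult of_rat_power)
    thus False using n by simp
  qed
  define n :: real where "n = (of_rat a)^2 - of_int D * (of_rat b)^2"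
  have e1: "kc (kinv p) = (of_rat a + of_rat b * s) / n"
    using Pair by (simp add: n_def of_rat_divide of_rat_diff of_rat_mult of_rat_power of_rat_minus diff_divide_distrib add_divide_distrib)
  have e2: "(of_rat a + of_rat b * s) * (of_rat a - of_rat b * s) = n"
    by (simp add: n_def algebra_simps power2_eq_square s_sq[symmetric])
  have "kc (kinv p) * kc p = ((of_rat a + of_rat b * s) * (of_rat a - of_rat b * s)) / n"
    using Pair e1 by simp
  also have "\<dots> = 1" using n' e2 by (simp add: n_def)
  finally show ?thesis .
qed

end


context cq begin

definition tau :: "rat \<times> rat" where "tau = (of_int A * of_int D, of_int A * of_int B)"

lemma Bs_lt_D: "real_of_int B * s < real_of_int D"
proof -
  have "(real_of_int B * s)^2 = real_of_int (B^2) * real_of_int D" by (simp add: power_mult_distrib s_sq2)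
  also have "\<dots> < real_of_int D * real_of_int D"
  proof (rule mult_strict_right_mono)
    have "B^2 < D" using D_def C_pos by simp
    thus "real_of_int (B^2) < real_of_int D" by linarith
    show "0 < real_of_int D" using D_ge2 by simp
  qed
  finally have "(real_of_int B * s)^2 < (real_of_int D)^2" by (simp add: power2_eq_square)
  moreover have "real_of_int D \<ge> 0" using D_ge2 by simp
  ultimately show ?thesis using power_less_imp_less_base by blast
qed

lemma kv_tau: "kv tau = real_of_int A * (real_of_int D + real_of_int B * s)"
  by (simp add: tau_def algebra_simps of_rat_mult)
lemma kc_tau: "kc tau = real_of_int A * (real_of_int D - real_of_int B * s)"
  by (simp add: tau_def algebra_simps of_rat_mult)

lemma kv_tau_neg: "kv tau < 0"
  unfolding kv_tau using A_neg B_pos s_pos D_ge2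
  by (intro mult_neg_pos) (simp_all add: add_pos_pos)
lemma kc_tau_neg: "kc tau < 0"
  unfolding kc_tau using A_neg Bs_lt_D by (intro mult_neg_pos) simp_all

definition t :: real where "t = sqrt (- kv tau)"
definition t' :: real where "t' = sqrt (- kc tau)"
lemma t_pos: "t > 0" unfolding t_def using kv_tau_neg by (intro real_sqrt_gt_zero) linarith
lemma t'_pos: "t' > 0" unfolding t'_def using kc_tau_neg by (intro real_sqrt_gt_zero) linarith
lemma t_sq: "t * t = - kv tau" unfolding t_def real_sqrt_mult_self using kv_tau_neg by (intro abs_of_pos) linarith
lemma t'_sq: "t' * t' = - kc tau" unfolding t'_def real_sqrt_mult_self using kc_tau_neg by (intro abs_of_pos) linarith

definition th :: complex where "th = \<i> * of_real t"
definition th' :: complex where "th' = \<i> * of_real t'"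

lemma th_sq: "th * th = of_real (kv tau)"
proof -
  have "th * th = - of_real (t * t)" by (simp add: th_def algebra_simps)
  thus ?thesis by (simp add: t_sq)
qed
lemma th'_sq: "th' * th' = of_real (kc tau)"
proof -
  have "th' * th' = - of_real (t' * t')" by (simp add: th'_def algebra_simps)
  thus ?thesis by (simp add: t'_sq)
qed

lemma theta_eq: "csqrt (of_int A * (of_int D + of_int B * of_real (sqrt (real_of_int D)))) = th"
proof -
  have "(of_int A * (of_int D + of_int B * of_real (sqrt (real_of_int D))) :: complex) = of_real (kv tau)"
    by (simp add: kv_tau s_def)
  hence "csqrt (of_int A * (of_int D + of_int B * of_real (sqrt (real_of_int D)))) = \<i> * of_real (sqrt \<bar>kv tau\<bar>)"
    using kv_tau_neg by simp
  also have "\<bar>kv tau\<bar> = - kv tau" using kv_tau_neg by simp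
  finally show ?thesis by (simp add: th_def t_def)
qed

type_synonym kel = "(rat \<times> rat) \<times> (rat \<times> rat)"

fun E1 :: "kel \<Rightarrow> complex" where "E1 (x,y) = of_real (kv x) + of_real (kv y) * th"
fun E2 :: "kel \<Rightarrow> complex" where "E2 (x,y) = of_real (kc x) + of_real (kc y) * th'"
fun Kmul :: "kel \<Rightarrow> kel \<Rightarrow> kel" where
  "Kmul (x1,y1) (x2,y2) = (kadd (kmul x1 x2) (kmul (kmul y1 y2) tau), kadd (kmul x1 y2) (kmul y1 x2))"
fun Kadd :: "kel \<Rightarrow> kel \<Rightarrow> kel" where
  "Kadd (x1,y1) (x2,y2) = (kadd x1 x2, kadd y1 y2)"
fun Kneg :: "kel \<Rightarrow> kel" where "Kneg (x,y) = (kneg x, kneg y)"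
definition Kconst :: "int \<Rightarrow> kel" where "Kconst c = ((of_int c,0),(0,0))"

lemma E1_mul: "E1 (Kmul P Q) = E1 P * E1 Q"
proof -
  obtain x1 y1 x2 y2 where PQ: "P = (x1,y1)" "Q = (x2,y2)" by (cases P, cases Q) auto
  have "E1 P * E1 Q = of_real (kv x1 * kv x2) + of_real (kv y1 * kv y2) * (th * th) + of_real (kv x1 * kv y2 + kv y1 * kv x2) * th"
    unfolding PQ E1.simps E2.simps of_real_add of_real_mult by (simp only: algebra_simps)
  also have "\<dots> = E1 (Kmul P Q)" unfolding PQ Kmul.simps E1.simps kv_add kv_mul th_sq of_real_add of_real_mult by (simp only: algebra_simps)
  finally show ?thesis ..
qed
lemma E2_mul: "E2 (Kmul P Q) = E2 P * E2 Q"
proof -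
  obtain x1 y1 x2 y2 where PQ: "P = (x1,y1)" "Q = (x2,y2)" by (cases P, cases Q) auto
  have "E2 P * E2 Q = of_real (kc x1 * kc x2) + of_real (kc y1 * kc y2) * (th' * th') + of_real (kc x1 * kc y2 + kc y1 * kc x2) * th'"
    unfolding PQ E1.simps E2.simps of_real_add of_real_mult by (simp only: algebra_simps)
  also have "\<dots> = E2 (Kmul P Q)" unfolding PQ Kmul.simps E2.simps kc_add kc_mul th'_sq of_real_add of_real_mult by (simp only: algebra_simps)
  finally show ?thesis ..
qed
lemma E1_add: "E1 (Kadd P Q) = E1 P + E1 Q"
proof -
  obtain x1 y1 x2 y2 where PQ: "P = (x1,y1)" "Q = (x2,y2)" by (cases P, cases Q) auto
  show ?thesis unfolding PQ Kadd.simps E1.simps kv_add of_real_add distrib_right by (simp only: ac_simps)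
qed
lemma E2_add: "E2 (Kadd P Q) = E2 P + E2 Q"
proof -
  obtain x1 y1 x2 y2 where PQ: "P = (x1,y1)" "Q = (x2,y2)" by (cases P, cases Q) auto
  show ?thesis unfolding PQ Kadd.simps E2.simps kc_add of_real_add distrib_right by (simp only: ac_simps)
qed
lemma E1_neg: "E1 (Kneg P) = - E1 P"
proof -
  obtain x1 y1 where PQ: "P = (x1,y1)" by (cases P) auto
  show ?thesis unfolding PQ Kneg.simps E1.simps kv_neg of_real_minus by simp
qed
lemma E2_neg: "E2 (Kneg P) = - E2 P"
proof -
  obtain x1 y1 where PQ: "P = (x1,y1)" by (cases P) auto
  show ?thesis unfolding PQ Kneg.simps E2.simps kc_neg of_real_minus by simp
qed
lemma E1_const: "E1 (Kconst c) = of_int c" by (simp add: Kconst_def)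
lemma E2_const: "E2 (Kconst c) = of_int c" by (simp add: Kconst_def)

lemma E1_Re: "Re (E1 (x,y)) = kv x" by (simp add: th_def)
lemma E1_Im: "Im (E1 (x,y)) = kv y * t" by (simp add: th_def)
lemma E2_Re: "Re (E2 (x,y)) = kc x" by (simp add: th'_def)
lemma E2_Im: "Im (E2 (x,y)) = kc y * t'" by (simp add: th'_def)

lemma E1_zero: assumes "E1 P = 0" shows "P = ((0,0),(0,0))"
proof -
  obtain x y where Pair: "P = (x,y)" by (cases P) auto
  have "kv x = Re (E1 P)" unfolding Pair by (rule E1_Re[symmetric])
  hence "kv x = 0" using assms by simp
  moreover have "kv y * t = Im (E1 P)" unfolding Pair by (rule E1_Im[symmetric])
  hence "kv y * t = 0" using assms by simp
  hence "kv y = 0" using t_pos by simp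
  ultimately have "x = (0,0)" "y = (0,0)" using kv_zero by blast+
  thus ?thesis using Pair by simp
qed

lemma horner:
  fixes p :: "int poly"
  shows "\<exists>w. E1 w = poly (map_poly of_int p) (E1 z) \<and> E2 w = poly (map_poly of_int p) (E2 z)"
proof (induction p)
  case 0
  show ?case by (rule exI[of _ "Kconst 0"]) (simp add: E1_const E2_const)
next
  case (pCons a p)
  then obtain w where w: "E1 w = poly (map_poly of_int p) (E1 z)" "E2 w = poly (map_poly of_int p) (E2 z)" by blast
  have pc: "\<And>x::complex. poly (map_poly of_int (pCons a p)) x = of_int a + x * poly (map_poly of_int p) x"
    by (simp only: of_int_hom.map_poly_pCons_hom poly_pCons)
  show ?case
    by (rule exI[of _ "Kadd (Kconst a) (Kmul z w)"])
       (simp only: E1_add E2_add E1_mul E2_mul E1_const E2_const w pc)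
qed

lemma conj_root:
  fixes p :: "int poly"
  assumes "poly (map_poly of_int p) (E1 z) = 0"
  shows "poly (map_poly of_int p) (E2 z) = 0"
proof -
  obtain w where w: "E1 w = poly (map_poly of_int p) (E1 z)" "E2 w = poly (map_poly of_int p) (E2 z)"
    using horner by blast
  hence "w = ((0,0),(0,0))" using assms E1_zero by simp
  thus ?thesis using w by simp
qed

lemma conj_alg_int: "algebraic_int (E1 z) \<Longrightarrow> algebraic_int (E2 z)"
  unfolding algebraic_int_altdef_ipoly using conj_root by blast

end


lemma gen_field_sub: "is_subfield_complex F \<Longrightarrow> S \<subseteq> F \<Longrightarrow> gen_field S \<subseteq> F"
  unfolding gen_field_def by blast
lemma gen_field_mem: "S \<subseteq> gen_field S"
  unfolding gen_field_def by blast

lemma reals_subfield: "is_subfield_complex {z. Im z = 0}"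
  unfolding is_subfield_complex_def by (simp add: Im_inverse)

context cq begin

fun Kinv :: "kel \<Rightarrow> kel" where
  "Kinv (x,y) = (let n = kadd (kmul x x) (kneg (kmul (kmul y y) tau)); ni = kinv n in (kmul x ni, kneg (kmul y ni)))"

lemma E1_inv: assumes "E1 P \<noteq> 0" shows "E1 (Kinv P) * E1 P = 1"
proof -
  obtain x y where P: "P = (x,y)" by (cases P) auto
  define n where "n = kadd (kmul x x) (kneg (kmul (kmul y y) tau))"
  define ni where "ni = kinv n"
  have kn: "kv n = kv x * kv x + kv y * kv y * (- kv tau)" unfolding n_def by (simp add: kv_add kv_mul kv_neg)
  have "kv x \<noteq> 0 \<or> kv y \<noteq> 0"
  proof (rule ccontr)
    assume "\<not> (kv x \<noteq> 0 \<or> kv y \<noteq> 0)"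
    hence "x = (0,0)" "y = (0,0)" using kv_zero by blast+
    hence "E1 P = 0" using P by simp
    thus False using assms by simp
  qed
  note nz = this
  have sqp: "\<And>r::real. r \<noteq> 0 \<Longrightarrow> r * r > 0" by (metis mult_neg_neg mult_pos_pos linorder_neqE)
  have h1: "kv y * kv y * (- kv tau) \<ge> 0" using kv_tau_neg by (rule_tac mult_nonneg_nonneg) simp_all
  have h2: "kv x * kv x \<ge> 0" by simp
  have "kv n > 0"
  proof (cases "kv x = 0")
    case False
    hence "kv x * kv x > 0" using sqp by blast
    thus ?thesis unfolding kn using h1 by linarith
  next
    case True
    hence "kv y \<noteq> 0" using nz by simp
    hence "kv y * kv y * (- kv tau) > 0" by (rule mult_pos_pos[OF sqp]) (use kv_tau_neg in auto)
    thus ?thesis unfolding kn using h2 by linarith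
  qed
  hence "n \<noteq> (0,0)" by auto
  hence inv: "kv ni * kv n = 1" unfolding ni_def by (rule kv_inv)
  have KP: "Kinv P = (kmul x ni, kneg (kmul y ni))" by (simp add: P n_def ni_def Let_def)
  have e1: "E1 (Kinv P) = of_real (kv x * kv ni) - of_real (kv y * kv ni) * th"
    unfolding KP by (simp add: kv_mul kv_neg)
  have e2: "E1 P = of_real (kv x) + of_real (kv y) * th" using P by simp
  have "E1 (Kinv P) * E1 P = (of_real (kv x * kv ni) - of_real (kv y * kv ni) * th) * (of_real (kv x) + of_real (kv y) * th)"
    by (simp only: e1 e2)
  also have "\<dots> = of_real (kv ni) * (of_real (kv x * kv x) - of_real (kv y * kv y) * (th * th))"
    by (simp add: algebra_simps)
  finally have "E1 (Kinv P) * E1 P = of_real (kv ni) * (of_real (kv x * kv x) - of_real (kv y * kv y) * (th * th))" .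
  also have "\<dots> = of_real (kv ni * kv n)" unfolding th_sq kn by (simp add: algebra_simps)
  also have "\<dots> = 1" using inv by simp
  finally show ?thesis .
qed

lemma rangeE1_subfield: "is_subfield_complex (range E1)"
  unfolding is_subfield_complex_def
proof (intro conjI ballI)
  show "0 \<in> range E1" using E1_const[of 0] by (metis of_int_0 rangeI)
  show "1 \<in> range E1" using E1_const[of 1] by (metis of_int_1 rangeI)
  fix a b assume a: "a \<in> range E1" and b: "b \<in> range E1"
  then obtain P Q where PQ: "a = E1 P" "b = E1 Q" by auto
  show "a + b \<in> range E1" using E1_add[of P Q] PQ by (metis rangeI)
  show "a - b \<in> range E1" using E1_add[of P "Kneg Q"] E1_neg[of Q] PQ by (metis rangeI diff_conv_add_uminus)
  show "a * b \<in> range E1" using E1_mul[of P Q] PQ by (metis rangeI)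
next
  fix a assume "a \<in> range E1"
  then obtain P where P: "a = E1 P" by auto
  show "inverse a \<in> range E1"
  proof (cases "a = 0")
    case True thus ?thesis using E1_const[of 0] by (metis inverse_zero of_int_0 rangeI)
  next
    case False
    hence "inverse a = E1 (Kinv P)" using E1_inv[of P] P by (simp add: inverse_unique mult.commute)
    thus ?thesis by simp
  qed
qed

lemma th_E1: "th = E1 ((0,0),(1,0))" by simp

lemma K_sub: "gen_field {th} \<subseteq> range E1"
  using gen_field_sub[OF rangeE1_subfield] th_E1 by (metis empty_subsetI insert_subset rangeI)

end


context cq begin

lemma s_sq_c: "complex_of_real s * complex_of_real s = of_int D"
  by (metis of_real_mult s_sq of_real_of_int_eq)

lemma kv_int_eq:
  fixes X Y :: int
  assumes "real_of_int X + real_of_int Y * s = 0"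
  shows "X = 0 \<and> Y = 0"
proof -
  have "kv (of_int X, of_int Y) = 0" using assms by simp
  hence "(of_int X :: rat, of_int Y :: rat) = (0,0)" by (rule kv_zero)
  thus ?thesis by simp
qed

lemma lemL:
  fixes a1 b1 e f :: int
  assumes eq: "((of_int a1 + of_int b1 * s) / 2)^2 = of_int A * s * ((of_int e + of_int f * s) / 2)"
  shows "A * D dvd a1"
proof -
  have "real_of_int (a1^2 + D*b1^2 - 2*A*f*D) + real_of_int (2*a1*b1 - 2*A*e) * s
        = 4 * ((of_int a1 + of_int b1 * s) / 2)^2 - 4 * (of_int A * s * ((of_int e + of_int f * s) / 2))"
    by (simp add: power2_eq_square algebra_simps s_sq)
  also have "\<dots> = 0" using eq by simp
  finally have "a1^2 + D*b1^2 - 2*A*f*D = 0 \<and> 2*a1*b1 - 2*A*e = 0" by (rule kv_int_eq)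
  hence X: "a1^2 = 2*A*f*D - D*b1^2" and Y: "a1*b1 = A*e" by auto
  have "a1^3 = a1 * (2*A*f*D - D*b1^2)" using X by (simp add: power3_eq_cube power2_eq_square)
  also have "\<dots> = A * (2*f*D*a1 - D*b1*e)" using Y by (simp add: algebra_simps power2_eq_square)
  finally have "A dvd a1^3" by simp
  hence Ad: "A dvd a1" using A_sqf sqf_dvd_pow by blast
  have "D dvd a1^2" using X by simp
  hence Dd: "D dvd a1" using D_sqf sqf_dvd_pow by blast
  have "coprime A D" using AD_coprime by (simp add: coprime_iff_gcd_eq_1)
  thus ?thesis using Ad Dd divides_mult by blast
qed

lemma coord:
  assumes ai: "algebraic_int (complex_of_real (kv w))"
  shows "\<exists>e f :: int. kv w = (of_int e + of_int f * s) / 2"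
proof -
  obtain u v where w: "w = (u,v)" by (cases w)
  have "E1 (w,(0,0)) = complex_of_real (kv w)" by simp
  hence a1: "algebraic_int (E1 (w,(0,0)))" using ai by simp
  hence "algebraic_int (E2 (w,(0,0)))" by (rule conj_alg_int)
  hence a2: "algebraic_int (complex_of_real (kc w))" by simp
  have "algebraic_int (complex_of_real (kv w) + complex_of_real (kc w))" using ai a2 by (rule alg_int_add)
  moreover have "complex_of_real (kv w) + complex_of_real (kc w) = of_real (of_rat (2*u))"
    using w by (simp add: of_rat_mult)
  ultimately have "algebraic_int (of_rat (2*u) :: real)" by simp
  hence "(of_rat (2*u) :: real) \<in> \<int>" by (intro rational_algebraic_int_is_int) simp_all
  then obtain e where e: "(of_rat (2*u) :: real) = of_int e" by (auto elim: Ints_cases)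
  hence eu: "2*u = of_int e" by (metis of_rat_eq_iff of_rat_of_int_eq)
  have "algebraic_int (complex_of_real (kv w) * complex_of_real (kc w))" using ai a2 by (rule alg_int_mult)
  moreover have "complex_of_real (kv w) * complex_of_real (kc w) = of_real (of_rat (u^2 - of_int D * v^2))"
    using w by (simp add: of_rat_mult of_rat_diff of_rat_power algebra_simps power2_eq_square s_sq s_sq_c)
  ultimately have "algebraic_int (of_rat (u^2 - of_int D * v^2) :: real)" by simp
  hence "(of_rat (u^2 - of_int D * v^2) :: real) \<in> \<int>" by (intro rational_algebraic_int_is_int) simp_all
  then obtain n where n: "(of_rat (u^2 - of_int D * v^2) :: real) = of_int n" by (auto elim: Ints_cases)
  hence nu: "u^2 - of_int D * v^2 = of_int n" by (metis of_rat_eq_iff of_rat_of_int_eq)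
  have "(2*v)^2 * of_int D = (2*u)^2 - 4 * (u^2 - of_int D * v^2)" by (simp add: algebra_simps power2_eq_square)
  also have "\<dots> = of_int (e^2 - 4*n)" using eu nu by simp
  finally have "(2*v)^2 * of_int D \<in> \<int>" by simp
  hence "2*v \<in> \<int>" using D_sqf rat_sq_int by blast
  then obtain f where f: "2*v = of_int f" by (auto elim: Ints_cases)
  have "kv w = (of_rat (2*u) + of_rat (2*v) * s) / 2" using w by (simp add: of_rat_mult algebra_simps)
  also have "\<dots> = (of_int e + of_int f * s)/2" using eu f by simp
  finally show ?thesis by blast
qed

end


context cq begin

lemma s_sq_assoc: "s * (s * x) = real_of_int D * x"
  by (simp add: mult.assoc[symmetric] s_sq)

lemma sq_root_alg: assumes "algebraic_int y" "x * x = (y::complex)" shows "algebraic_int x"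
  by (rule algebraic_int_root[OF assms(1), of "monom 1 2"])
     (use assms(2) in \<open>auto simp: poly_monom coeff_monom power2_eq_square degree_monom_eq\<close>)

lemma s_alg: "algebraic_int (complex_of_real s)"
  unfolding s_def by (intro algebraic_int_of_real algebraic_int_sqrt) simp

lemma tau_alg: "algebraic_int (complex_of_real (kv tau))" "algebraic_int (complex_of_real (kc tau))"
proof -
  have "complex_of_real (kv tau) = of_int A * (of_int D + of_int B * complex_of_real s)" by (simp add: kv_tau)
  thus "algebraic_int (complex_of_real (kv tau))"
    by (simp only:) (intro alg_int_mult alg_int_add s_alg algebraic_int_of_int)
  have "complex_of_real (kc tau) = of_int A * (of_int D - of_int B * complex_of_real s)" by (simp add: kc_tau)
  thus "algebraic_int (complex_of_real (kc tau))"
    by (simp only:) (intro alg_int_mult alg_int_diff s_alg algebraic_int_of_int)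
qed

lemma th_alg: "algebraic_int th" using sq_root_alg[OF tau_alg(1) th_sq] .
lemma th'_alg: "algebraic_int th'" using sq_root_alg[OF tau_alg(2) th'_sq] .

lemma DC: "real_of_int D = (real_of_int B)^2 + (real_of_int C)^2"
proof -
  have "real_of_int D = real_of_int (B^2 + C^2)" using D_def by (simp only:)
  thus ?thesis by simp
qed

lemma tt': "t * t' = - real_of_int A * real_of_int C * s"
proof -
  have "(t * t')^2 = (t*t) * (t'*t')" by (simp add: power2_eq_square algebra_simps)
  also have "\<dots> = kv tau * kc tau" by (simp add: t_sq t'_sq)
  also have "\<dots> = (real_of_int A)^2 * (real_of_int D * real_of_int D - (real_of_int B)^2 * (s * s))"
    by (simp add: kv_tau kc_tau power2_eq_square algebra_simps)
  also have "\<dots> = (real_of_int A)^2 * (real_of_int D * (real_of_int D - (real_of_int B)^2))"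
    by (simp add: s_sq power2_eq_square algebra_simps)
  also have "\<dots> = (- real_of_int A * real_of_int C * s)^2"
    by (simp add: DC power2_eq_square algebra_simps s_sq)
  finally have "(t * t')^2 = (- real_of_int A * real_of_int C * s)^2" .
  moreover have "t * t' \<ge> 0" using t_pos t'_pos by simp
  moreover have "- real_of_int A * real_of_int C * s \<ge> 0" using A_neg C_pos s_pos
    by (intro mult_nonneg_nonneg) simp_all
  ultimately show ?thesis by (metis power2_eq_iff_nonneg)
qed

lemma th_th': "th * th' = complex_of_real (real_of_int A * real_of_int C * s)"
proof -
  have "th * th' = - complex_of_real (t * t')" by (simp add: th_def th'_def algebra_simps)
  thus ?thesis by (simp add: tt')
qed

lemma cnj_th: "cnj th = - th" by (simp add: th_def)

lemma key_int:
  fixes x0 :: "rat \<times> rat" and c d :: rat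
  assumes ai: "algebraic_int (E1 (x0, (c,d)))"
  shows "4 * (c + d * of_int B) \<in> \<int> \<and> 4 * of_int C * d \<in> \<int>"
proof -
  define y where "y = kv (c,d)"
  define a where "a = E1 (x0, (c,d))"
  have a_eq: "a = of_real (kv x0) + of_real y * th" by (simp add: a_def y_def)
  have "cnj a = of_real (kv x0) - of_real y * th" unfolding a_eq by (simp add: cnj_th)
  hence gam: "a - cnj a = 2 * of_real y * th" unfolding a_eq by simp
  have aa: "algebraic_int a" using ai by (simp add: a_def)
  have "algebraic_int (cnj a)" using aa by simp
  hence ga: "algebraic_int (a - cnj a)" using aa by (intro alg_int_diff)
  hence ga': "algebraic_int (2 * of_real y * th)" using gam by simp
  have z1a: "algebraic_int ((2 * of_real y * th) * th)" using ga' th_alg by (rule alg_int_mult)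
  have z1v: "(2 * of_real y * th) * th = complex_of_real (2 * y * kv tau)"
    by (simp add: mult.assoc th_sq)
  define w1 :: "rat \<times> rat" where "w1 = (2 * of_int A * of_int D * (c + d * of_int B), 2 * of_int A * (c * of_int B + d * of_int D))"
  have w1v: "kv w1 = 2 * y * kv tau"
    by (simp add: w1_def y_def kv_tau of_rat_mult of_rat_add algebra_simps s_sq)
  obtain e1 f1 where ef1: "kv w1 = (of_int e1 + of_int f1 * s) / 2"
    using coord[of w1] z1a z1v w1v by auto
  have Ea: "algebraic_int ((2 * of_real y * th) * (2 * of_real y * th))" using ga' ga' by (rule alg_int_mult)
  have Ev: "(2 * of_real y * th) * (2 * of_real y * th) = complex_of_real (4 * y * y * kv tau)"
    by (simp add: th_sq[symmetric] algebra_simps)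
  define wW where "wW = kmul (kmul (kmul (4,0) (kmul (c,d) (c,d))) tau) (of_int B, 1)"
  have "kv wW = kv (4,0) * (kv (c,d) * kv (c,d)) * kv tau * kv (of_int B, 1)"
    unfolding wW_def by (simp only: kv_mul)
  hence wWv: "kv wW = 4 * y * y * kv tau * (s + of_int B)"
    by (simp add: y_def algebra_simps)
  have "algebraic_int (complex_of_real (4 * y * y * kv tau) * (complex_of_real s + of_int B))"
    using Ea Ev by (intro alg_int_mult alg_int_add s_alg algebraic_int_of_int) simp_all
  hence "algebraic_int (complex_of_real (kv wW))" by (simp add: wWv)
  then obtain eW fW where efW: "kv wW = (of_int eW + of_int fW * s) / 2" using coord by blast
  have "((of_int e1 + of_int f1 * s) / 2)^2 = of_int A * s * ((of_int eW + of_int fW * s) / 2)"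
    unfolding ef1[symmetric] efW[symmetric] w1v wWv
    by (simp add: power2_eq_square kv_tau algebra_simps s_sq s_sq_assoc)
  hence d1: "A * D dvd e1" by (rule lemL)
  have "kv (2 * of_int A * of_int D * (c + d * of_int B) - of_int e1 / 2, 2 * of_int A * (c * of_int B + d * of_int D) - of_int f1 / 2) = kv w1 - (of_int e1 + of_int f1 * s) / 2"
    by (simp add: w1_def of_rat_mult of_rat_add of_rat_diff of_rat_divide algebra_simps add_divide_distrib)
  also have "\<dots> = 0" using ef1 by simp
  finally have "2 * of_int A * of_int D * (c + d * of_int B) - of_int e1 / 2 = 0" using kv_zero by blast
  hence e1v: "of_int e1 = 4 * of_int A * of_int D * (c + d * of_int B)" by simp
  obtain k1 where k1: "e1 = A * D * k1" using d1 by auto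
  have AD0: "of_int A * of_int D \<noteq> (0::rat)" using A_neg D_ge2 by simp
  have "of_int A * of_int D * (4 * (c + d * of_int B)) = of_int A * of_int D * (of_int k1 :: rat)"
    using e1v unfolding k1 by (simp add: of_int_mult ac_simps) (metis)
  hence "4 * (c + d * of_int B) = of_int k1" using mult_left_cancel[OF AD0] by blast
  hence L1: "4 * (c + d * of_int B) \<in> \<int>" by simp
  have z2a: "algebraic_int ((2 * of_real y * th) * th')" using ga' th'_alg by (rule alg_int_mult)
  have z2v: "(2 * of_real y * th) * th' = complex_of_real (2 * y * (real_of_int A * real_of_int C * s))"
    by (simp add: mult.assoc th_th')
  define w2 :: "rat \<times> rat" where "w2 = (2 * of_int A * of_int C * d * of_int D, 2 * of_int A * of_int C * c)"
  have w2v: "kv w2 = 2 * y * (real_of_int A * real_of_int C * s)"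
    by (simp add: w2_def y_def of_rat_mult algebra_simps s_sq)
  obtain e2 f2 where ef2: "kv w2 = (of_int e2 + of_int f2 * s) / 2"
    using coord[of w2] z2a z2v w2v by auto
  define wW' where "wW' = kmul (kmul (kmul (4,0) (kmul (c,d) (c,d))) tau) (- of_int B, 1)"
  have "kv wW' = kv (4,0) * (kv (c,d) * kv (c,d)) * kv tau * kv (- of_int B, 1)"
    unfolding wW'_def by (simp only: kv_mul)
  hence wWv': "kv wW' = 4 * y * y * kv tau * (s - of_int B)"
    by (simp add: y_def algebra_simps of_rat_minus)
  have "algebraic_int (complex_of_real (4 * y * y * kv tau) * (complex_of_real s - of_int B))"
    using Ea Ev by (intro alg_int_mult alg_int_diff s_alg algebraic_int_of_int) simp_all
  hence "algebraic_int (complex_of_real (kv wW'))" by (simp add: wWv')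
  then obtain eW' fW' where efW': "kv wW' = (of_int eW' + of_int fW' * s) / 2" using coord by blast
  have "((of_int e2 + of_int f2 * s) / 2)^2 = of_int A * s * ((of_int eW' + of_int fW' * s) / 2)"
    unfolding ef2[symmetric] efW'[symmetric] w2v wWv'
    by (simp add: power2_eq_square kv_tau algebra_simps s_sq s_sq_assoc DC)
  hence d2: "A * D dvd e2" by (rule lemL)
  have "kv (2 * of_int A * of_int C * d * of_int D - of_int e2 / 2, 2 * of_int A * of_int C * c - of_int f2 / 2) = kv w2 - (of_int e2 + of_int f2 * s) / 2"
    by (simp add: w2_def of_rat_mult of_rat_add of_rat_diff of_rat_divide algebra_simps add_divide_distrib)
  also have "\<dots> = 0" using ef2 by simp
  finally have "2 * of_int A * of_int C * d * of_int D - of_int e2 / 2 = 0" using kv_zero by blast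
  hence e2v: "of_int e2 = 4 * of_int A * of_int D * (of_int C * d)" by (simp add: algebra_simps)
  obtain k2 where k2: "e2 = A * D * k2" using d2 by auto
  have "of_int A * of_int D * (4 * (of_int C * d)) = of_int A * of_int D * (of_int k2 :: rat)"
    using e2v unfolding k2 by (simp add: of_int_mult ac_simps) (metis)
  hence "4 * (of_int C * d) = of_int k2" using mult_left_cancel[OF AD0] by blast
  hence "4 * of_int C * d \<in> \<int>" by (simp add: mult.assoc)
  with L1 show ?thesis by blast
qed

end


lemma root_factor:
  fixes M :: "int poly multiset" and z :: complex
  assumes "poly (map_poly of_int (prod_mset M)) z = 0"
  shows "\<exists>f\<in>#M. poly (map_poly of_int f) z = 0"
  using assms
proof (induction M)
  case empty thus ?case by simp
next
  case (add f M)
  have "poly (map_poly of_int f) z * poly (map_poly of_int (prod_mset M)) z = 0"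
    using add.prems by (simp add: of_int_poly_hom.hom_mult)
  thus ?case using add.IH by auto
qed

lemma min_poly_exists:
  fixes z :: complex
  assumes "algebraic_int z"
  shows "\<exists>p. is_min_int_poly p z"
proof -
  obtain p where p: "poly (map_poly of_int p) z = 0" "monic p"
    using assms unfolding algebraic_int_altdef_ipoly by blast
  have p0: "p \<noteq> 0" using p(2) by auto
  have uf: "unit_factor p = 1" using p(2) by (simp add: unit_factor_poly_def)
  have "normalize p = p" using unit_factor_mult_normalize[of p] uf by simp
  hence np: "normalize (prod_mset (prime_factorization p)) = p" using prod_mset_prime_factorization_weak[OF p0] by simp
  define P where "P = prod_mset (prime_factorization p)"
  have "P = unit_factor P * p" using unit_factor_mult_normalize[of P] np by (simp add: P_def)
  hence "poly (map_poly of_int P) z = poly (map_poly of_int (unit_factor P)) z * poly (map_poly of_int p) z"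
    by (metis of_int_poly_hom.hom_mult poly_mult)
  hence "poly (map_poly of_int P) z = 0" using p(1) by simp
  then obtain f where f: "f \<in># prime_factorization p" "poly (map_poly of_int f) z = 0"
    using root_factor[of "prime_factorization p" z] unfolding P_def by auto
  have pf: "prime f" using f(1) by (simp add: in_prime_factors_imp_prime)
  hence irr: "irreducible f" by (simp add: prime_elem_imp_irreducible)
  have f0: "f \<noteq> 0" using pf by auto
  have "degree f \<noteq> 0"
  proof
    assume "degree f = 0"
    then obtain c where "f = [:c:]" by (metis degree_eq_zeroE)
    thus False using f(2) f0 by simp
  qed
  hence "content f = 1" using irr nonconst_poly_irreducible_iff by blast
  thus ?thesis unfolding is_min_int_poly_def using irr f(2) by blast
qed

lemma mahler_lb:
  fixes q :: "int poly" and S :: "complex set"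
  assumes q0: "q \<noteq> 0" and fin: "finite S" and sub: "S \<subseteq> {r. poly (map_poly of_int q) r = 0}"
  shows "(\<Prod>r\<in>S. max 1 (cmod r)) \<le> mahler_measure (map_poly of_int q)"
proof -
  define Q :: "complex poly" where "Q = map_poly of_int q"
  have Q0: "Q \<noteq> 0" using q0 by (simp add: Q_def)
  define R where "R = {r. poly Q r = 0}"
  have finR: "finite R" unfolding R_def using Q0 by (rule poly_roots_finite)
  have SR: "S \<subseteq> R" using sub by (simp add: R_def Q_def)
  have "(\<Prod>r\<in>S. max 1 (cmod r)) \<le> (\<Prod>r\<in>S. max 1 (cmod r) ^ order r Q)"
  proof (rule prod_mono)
    fix r assume r: "r \<in> S"
    hence "order r Q \<noteq> 0" using SR Q0 order_root[of Q r] by (auto simp: R_def)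
    hence "max 1 (cmod r) ^ 1 \<le> max 1 (cmod r) ^ order r Q" by (intro power_increasing) auto
    thus "0 \<le> max 1 (cmod r) \<and> max 1 (cmod r) \<le> max 1 (cmod r) ^ order r Q" by simp
  qed
  also have "\<dots> \<le> (\<Prod>r\<in>R. max 1 (cmod r) ^ order r Q)"
    by (rule prod_mono2[OF finR SR]) auto
  also have "\<dots> \<le> cmod (lead_coeff Q) * (\<Prod>r\<in>R. max 1 (cmod r) ^ order r Q)"
  proof -
    have "lead_coeff Q = of_int (lead_coeff q)" by (simp add: Q_def)
    moreover have "lead_coeff q \<noteq> 0" using q0 by simp
    hence "(1::int) \<le> \<bar>lead_coeff q\<bar>" by linarith
    hence "1 \<le> \<bar>real_of_int (lead_coeff q)\<bar>" by (metis of_int_1_le_iff of_int_abs)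
    ultimately have "cmod (lead_coeff Q) \<ge> 1" by simp
    moreover have "(\<Prod>r\<in>R. max 1 (cmod r) ^ order r Q) \<ge> 0" by (intro prod_nonneg) auto
    ultimately show ?thesis by (metis mult_le_cancel_right1 mult.commute le_less_trans linorder_not_le order.refl)
  qed
  also have "\<dots> = mahler_measure (map_poly of_int q)" by (simp add: mahler_measure_def Q_def R_def)
  finally show ?thesis .
qed


lemma cnj_root:
  fixes q :: "int poly" and z :: complex
  assumes "poly (map_poly of_int q) z = 0"
  shows "poly (map_poly of_int q) (cnj z) = 0"
proof -
  have "map_poly cnj (map_poly of_int q) = (map_poly of_int q :: complex poly)"
    by (subst map_poly_map_poly) (auto simp: o_def)
  hence "poly (map_poly of_int q) (cnj z) = cnj (poly (map_poly of_int q) z)"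
    using poly_cnj[of "map_poly of_int q" z] by simp
  thus ?thesis using assms by simp
qed

context cq begin

lemma D_rat: "(of_int D :: rat) = (of_int B)^2 + (of_int C)^2"
proof -
  have "(of_int D :: rat) = of_int (B^2 + C^2)" using D_def by (simp only:)
  thus ?thesis by simp
qed

lemma im_sq_ne:
  fixes c d :: rat
  assumes ne: "(c,d) \<noteq> (0,0)"
  shows "(kv (c,d) * t)^2 \<noteq> (kc (c,d) * t')^2"
proof
  assume eq: "(kv (c,d) * t)^2 = (kc (c,d) * t')^2"
  define X where "X = of_int B * (c^2 + of_int D * d^2) + 2 * c * d * of_int D"
  have "(kv (c,d) * t)^2 - (kc (c,d) * t')^2 = kc (c,d)^2 * kc tau - kv (c,d)^2 * kv tau"
    by (simp add: power_mult_distrib power2_eq_square t_sq t'_sq algebra_simps)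
  also have "\<dots> = - 2 * real_of_int A * s * of_rat X"
    by (simp add: X_def kv_tau kc_tau power2_eq_square algebra_simps of_rat_mult of_rat_add s_sq s_sq_assoc)
  finally have "2 * real_of_int A * s * of_rat X = 0" using eq by simp
  hence X0: "X = 0" using A_neg s_pos by simp
  have "(of_int B * c + of_int D * d)^2 = of_int D * (of_int C * d)^2 + of_int B * X"
    by (simp add: X_def D_rat power2_eq_square algebra_simps)
  hence "(of_int B * c + of_int D * d)^2 = of_int D * (of_int C * d)^2" using X0 by simp
  hence "of_int C * d = 0" by (rule irr2)
  hence d0: "d = 0" using C_pos by simp
  hence "of_int B * c^2 = 0" using X0 by (simp add: X_def)
  hence "c = 0" using B_pos by simp
  thus False using ne d0 by simp
qed

lemma elem_bound:
  assumes aK: "a \<in> ring_of_integers (gen_field {th})" and gen: "gen_field {a} = gen_field {th}"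
  shows "real_of_int (A^2 * D) / 2304 \<le> mahler_alg a"
proof -
  have aK': "a \<in> gen_field {th}" and aint: "alg_integer a" using aK by (auto simp: ring_of_integers_def)
  obtain P where "a = E1 P" using aK' K_sub by auto
  then obtain x0 c d where a_eq: "a = E1 (x0, (c,d))" by (metis surj_pair)
  have yne: "(c,d) \<noteq> (0,0)"
  proof
    assume y0: "(c,d) = (0,0)"
    hence "Im a = 0" using a_eq E1_Im[of x0 "(c,d)"] by simp
    hence "gen_field {a} \<subseteq> {z. Im z = 0}" by (intro gen_field_sub reals_subfield) auto
    moreover have "th \<in> gen_field {th}" using gen_field_mem by blast
    ultimately have "Im th = 0" using gen by auto
    thus False using t_pos by (simp add: th_def)
  qed
  have ai: "algebraic_int a" using aint unfolding alg_integer_def algebraic_int_altdef_ipoly by auto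
  from key_int[of x0 c d] ai a_eq obtain l m :: int where
    l: "4 * (c + d * of_int B) = of_int l" and m: "4 * of_int C * d = of_int m"
    by (auto elim!: Ints_cases)
  define N where "N = c^2 - of_int D * d^2"
  have N0: "N \<noteq> 0"
  proof
    assume "N = 0"
    hence "c^2 = of_int D * d^2" by (simp add: N_def)
    hence d0: "d = 0" by (rule irr2)
    hence "c = 0" using \<open>N = 0\<close> by (simp add: N_def)
    thus False using yne d0 by simp
  qed
  have "16 * of_int C * N = of_int C * (4 * (c + d * of_int B))^2 - 2 * of_int B * (4 * (c + d * of_int B)) * (4 * of_int C * d) - of_int C * (4 * of_int C * d)^2"
    by (simp add: N_def D_rat power2_eq_square algebra_simps)
  also have "\<dots> = of_int (C * l^2 - 2 * B * l * m - C * m^2)" unfolding l m by simp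
  finally have nN: "16 * of_int C * N = of_int (C * l^2 - 2 * B * l * m - C * m^2)" .
  define n where "n = C * l^2 - 2 * B * l * m - C * m^2"
  have nN': "(of_int n :: rat) = 16 * of_int C * N" using nN by (simp add: n_def)
  have "16 * of_int C * N \<noteq> (0::rat)" using N0 C_pos by simp
  hence "n \<noteq> 0" using nN' by (metis of_int_0)
  hence "1 \<le> \<bar>n\<bar>" by linarith
  hence "1 \<le> \<bar>n\<bar>^2" by (rule one_le_power)
  hence "1 \<le> n^2" by (simp only: power2_abs)
  hence n1: "(1::rat) \<le> (of_int n)^2" by (metis of_int_1_le_iff of_int_power)
  have "(16 * of_int C * N)^2 = (of_int n)^2" using nN' by simp
  hence "(1::rat) \<le> 256 * (of_int C)^2 * N^2" using n1 by (simp add: power_mult_distrib)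
  hence "(of_rat 1 :: real) \<le> of_rat (256 * (of_int C)^2 * N^2)" by (simp only: of_rat_less_eq)
  hence NC: "1 \<le> 256 * (real_of_int C)^2 * (of_rat N)^2" by (simp add: of_rat_mult of_rat_power)
  define b where "b = E2 (x0, (c,d))"
  define q where "q = (SOME p. is_min_int_poly p a)"
  have hq: "is_min_int_poly q a" unfolding q_def using someI_ex[OF min_poly_exists[OF ai]] .
  have q0: "q \<noteq> 0" using hq by (auto simp: is_min_int_poly_def)
  have ra: "poly (map_poly of_int q) a = 0" using hq by (simp add: is_min_int_poly_def)
  have rb: "poly (map_poly of_int q) b = 0" using conj_root[of q "(x0,(c,d))"] ra a_eq b_def by simp
  have rca: "poly (map_poly of_int q) (cnj a) = 0" using ra by (rule cnj_root)
  have rcb: "poly (map_poly of_int q) (cnj b) = 0" using rb by (rule cnj_root)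
  have Ia: "Im a = kv (c,d) * t" using a_eq E1_Im[of x0 "(c,d)"] by simp
  have Ib: "Im b = kc (c,d) * t'" using b_def E2_Im[of x0 "(c,d)"] by simp
  have kvnz: "kv (c,d) \<noteq> 0" using kv_zero yne by blast
  have kcnz: "kc (c,d) \<noteq> 0" using kc_zero yne by blast
  have Ia0: "Im a \<noteq> 0" using Ia kvnz t_pos by simp
  have Ib0: "Im b \<noteq> 0" using Ib kcnz t'_pos by simp
  have ne: "(Im a)^2 \<noteq> (Im b)^2" using im_sq_ne[OF yne] Ia Ib by simp
  have d1: "a \<noteq> cnj a"
  proof assume "a = cnj a" hence "Im a = - Im a" by (metis cnj.sel(2)) thus False using Ia0 by simp qed
  have d2: "b \<noteq> cnj b"
  proof assume "b = cnj b" hence "Im b = - Im b" by (metis cnj.sel(2)) thus False using Ib0 by simp qed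
  have d3: "a \<noteq> b" using ne by auto
  have d4: "a \<noteq> cnj b"
  proof assume "a = cnj b" hence "Im a = - Im b" by (metis cnj.sel(2)) thus False using ne by simp qed
  have d5: "cnj a \<noteq> b"
  proof assume "cnj a = b" hence "Im b = - Im a" by (metis cnj.sel(2)) thus False using ne by simp qed
  have d6: "cnj a \<noteq> cnj b" using d3 by simp
  define S where "S = {a, cnj a, b, cnj b}"
  have prodS: "(\<Prod>r\<in>S. max 1 (cmod r)) = (max 1 (cmod a) * max 1 (cmod a)) * (max 1 (cmod b) * max 1 (cmod b))"
    unfolding S_def using d1 d2 d3 d4 d5 d6 by (simp add: mult.assoc)
  have lb: "(\<Prod>r\<in>S. max 1 (cmod r)) \<le> mahler_measure (map_poly of_int q)"
    by (rule mahler_lb[OF q0]) (auto simp: S_def ra rb rca rcb)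
  have Ma: "(Im a)^2 \<le> max 1 (cmod a) * max 1 (cmod a)"
  proof -
    have "\<bar>Im a\<bar> \<le> max 1 (cmod a)" using abs_Im_le_cmod[of a] by linarith
    hence "\<bar>Im a\<bar> * \<bar>Im a\<bar> \<le> max 1 (cmod a) * max 1 (cmod a)" by (intro mult_mono) auto
    thus ?thesis by (simp add: power2_eq_square)
  qed
  have Mb: "(Im b)^2 \<le> max 1 (cmod b) * max 1 (cmod b)"
  proof -
    have "\<bar>Im b\<bar> \<le> max 1 (cmod b)" using abs_Im_le_cmod[of b] by linarith
    hence "\<bar>Im b\<bar> * \<bar>Im b\<bar> \<le> max 1 (cmod b) * max 1 (cmod b)" by (intro mult_mono) auto
    thus ?thesis by (simp add: power2_eq_square)
  qed
  have "(Im a)^2 * (Im b)^2 \<le> (max 1 (cmod a) * max 1 (cmod a)) * (max 1 (cmod b) * max 1 (cmod b))"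
    using Ma Mb by (intro mult_mono) auto
  also have "\<dots> \<le> mahler_measure (map_poly of_int q)" using lb prodS by simp
  also have "\<dots> = mahler_alg a" by (simp add: mahler_alg_def q_def)
  finally have main: "(Im a)^2 * (Im b)^2 \<le> mahler_alg a" .
  have kvkc: "kv (c,d) * kc (c,d) = of_rat N"
    by (simp add: N_def of_rat_diff of_rat_mult of_rat_power power2_eq_square algebra_simps s_sq_assoc s_sq)
  have "(Im a)^2 * (Im b)^2 = (kv (c,d) * kc (c,d))^2 * (t * t')^2"
    unfolding Ia Ib by (simp add: power_mult_distrib)
  also have "\<dots> = (of_rat N)^2 * (real_of_int A)^2 * (real_of_int C)^2 * real_of_int D"
    unfolding kvkc tt' by (simp add: power_mult_distrib s_sq2)
  finally have IaIb: "(Im a)^2 * (Im b)^2 = (of_rat N)^2 * (real_of_int A)^2 * (real_of_int C)^2 * real_of_int D" .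
  have AD0: "(real_of_int A)^2 * real_of_int D \<ge> 0" using D_ge2 by simp
  have "real_of_int (A^2 * D) / 2304 \<le> real_of_int (A^2 * D) / 256"
    using AD0 by (intro divide_left_mono) (simp_all add: mult.commute)
  also have "\<dots> = (real_of_int A)^2 * real_of_int D * 1 / 256" by simp
  also have "\<dots> \<le> (real_of_int A)^2 * real_of_int D * (256 * (real_of_int C)^2 * (of_rat N)^2) / 256"
    using NC AD0 by (intro divide_right_mono mult_left_mono) auto
  also have "\<dots> = (Im a)^2 * (Im b)^2" unfolding IaIb by (simp add: algebra_simps)
  also have "\<dots> \<le> mahler_alg a" by (rule main)
  finally show ?thesis .
qed

end

theorem proposition6p2:
  fixes A B C D :: int
  assumes "A < 0" and "odd A" and "squarefree A"
    and "B > 0" and "C > 0" and "D = B^2 + C^2" and "squarefree D"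
    and "gcd A D = 1"
  shows "real_of_int (A^2 * D) / 2304 \<le>
     mahler_ring_of_integers
       (gen_field {csqrt (of_int A * (of_int D + of_int B * of_real (sqrt (real_of_int D))))})"
proof -
  interpret cq A B C D using assms by unfold_locales
  define K where "K = gen_field {th}"
  have Keq: "gen_field {csqrt (of_int A * (of_int D + of_int B * of_real (sqrt (real_of_int D))))} = K"
    unfolding K_def theta_eq ..
  define SS where "SS = {mahler_alg a | a. a \<in> ring_of_integers K \<and> gen_field {a} = K}"
  have "th \<in> K" unfolding K_def using gen_field_mem by blast
  moreover have "alg_integer th" using th_alg unfolding alg_integer_def algebraic_int_altdef_ipoly by auto
  ultimately have "th \<in> ring_of_integers K" by (simp add: ring_of_integers_def)
  hence ne: "SS \<noteq> {}" unfolding SS_def K_def by auto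
  have "\<forall>x\<in>SS. real_of_int (A^2 * D) / 2304 \<le> x"
    unfolding SS_def K_def using elem_bound by auto
  hence "real_of_int (A^2 * D) / 2304 \<le> Inf SS" using ne by (intro cInf_greatest) auto
  thus ?thesis unfolding Keq mahler_ring_of_integers_def SS_def .
qed


end
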